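(* Under the standing setup, the Nisio semigroup $\mathscr S=(\mathscr S(t))_{t\ge0}$ of $(\mathcal P,f)$ is a semigroup of convex kernels on $\mathbb R^d$; in particular $\mathscr S(0)=I$ and $\mathscr S(s+t)=\mathscr S(s)\mathscr S(t)$ for all $s,t\ge0$. Moreover, $\mathscr S$ coincides with the semigroup envelope of $(\mathcal P,f)$.
   Context: Standing setup: $d\in\mathbb N$; vectors in $\mathbb R^d$; inequalities and suprema of vectors are componentwise; reals are identified with constant vectors. A $Q$-matrix is $q\in\mathbb R^{d\times d}$ with $q_{ii}\le0$, $q_{ij}\ge0$ ($i\ne j$), $\sum_jq_{ij}=0$. Let $\mathcal P$ be a set of $Q$-matrices and $f=(f_q)_{q\in\mathcal P}\subset\mathbb R^d$ with $\sup_{q\in\mathcal P}f_q=f_{q_0}=0$ for some $q_0\in\mathcal P$, such that $\mathcal Qu:=\sup_{q\in\mathcal P}(qu+f_q)$ is finite for every $u\in\mathbb R^d$. For $q\in\mathcal P$, $t\ge0$: $S_q(t)u_0:=e^{tq}u_0+\int_0^te^{sq}f_q\,ds$. For $h\ge0$: $\mathcal E_hu_0:=\sup_{q\in\mathcal P}S_q(h)u_0$. $P$ is the set of finite subsets $\pi\subset[0,\infty)$ with $0\in\pi$; $P_t:=\{\pi\in P:\max\pi=t\}$. For $\pi=\{t_0,\dots,t_m\}$ with $0=t_0<\dots<t_m$, $m\ge1$, $\mathcal E_\pi:=\mathcal E_{t_1-t_0}\circ\cdots\circ\mathcal E_{t_m-t_{m-1}}$, and $\mathcal E_{\{0\}}:=\mathcal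 E_0$. The Nisio semigroup of $(\mathcal P,f)$ is $\mathscr S(t)u_0:=\sup_{\pi\in P_t}\mathcal E_\pi u_0$. A kernel is a map $\mathbb R^d\to\mathbb R^d$ that is monotone (componentwise order) and maps each constant vector $\alpha$ to $\alpha$; convex means each component is convex. A semigroup is a family $(\mathscr T(t))_{t\ge0}$ of maps $\mathbb R^d\to\mathbb R^d$ with $\mathscr T(0)=I$ and $\mathscr T(s+t)=\mathscr T(s)\circ\mathscr T(t)$. The semigroup envelope of $(\mathcal P,f)$ is the semigroup $\mathscr T$ with $\mathscr T(t)u_0\ge S_q(t)u_0$ for all $t\ge0,u_0,q\in\mathcal P$, which is below (componentwise, for all $t,u_0$) every other semigroup with this domination property. *)

theory Defs
  imports "HOL-Analysis.Analysis"
begin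

text \<open>Vectors in R^d are modelled as real^'n (d = CARD('n)); d x d matrices as real^'n^'n.
  The order on real^'n is the library's componentwise order.\<close>

definition is_Q_matrix :: "real^'n^'n \<Rightarrow> bool" where
  "is_Q_matrix q \<longleftrightarrow> (\<forall>i. q $ i $ i \<le> 0) \<and> (\<forall>i j. i \<noteq> j \<longrightarrow> q $ i $ j \<ge> 0)
     \<and> (\<forall>i. (\<Sum>j\<in>UNIV. q $ i $ j) = 0)"

definition vsup :: "(real^'n) set \<Rightarrow> real^'n" where
  "vsup A = (\<chi> i. SUP v\<in>A. v $ i)"

primrec mpow :: "real^'n^'n \<Rightarrow> nat \<Rightarrow> real^'n^'n" where
  "mpow A 0 = mat 1"
| "mpow A (Suc k) = A ** mpow A k"

definition mexp :: "real^'n^'n \<Rightarrow> real^'n^'n" where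
  "mexp A = (\<Sum>k. (1 / fact k) *\<^sub>R mpow A k)"

definition Sq :: "(real^'n^'n \<Rightarrow> real^'n) \<Rightarrow> real^'n^'n \<Rightarrow> real \<Rightarrow> real^'n \<Rightarrow> real^'n" where
  "Sq f q t u0 = mexp (t *\<^sub>R q) *v u0 + integral {0..t} (\<lambda>s. mexp (s *\<^sub>R q) *v f q)"

definition Eh :: "(real^'n^'n) set \<Rightarrow> (real^'n^'n \<Rightarrow> real^'n) \<Rightarrow> real \<Rightarrow> real^'n \<Rightarrow> real^'n" where
  "Eh P f h u0 = vsup ((\<lambda>q. Sq f q h u0) ` P)"

fun Ecomp :: "(real^'n^'n) set \<Rightarrow> (real^'n^'n \<Rightarrow> real^'n) \<Rightarrow> real list \<Rightarrow> real^'n \<Rightarrow> real^'n" where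
  "Ecomp P f (x # y # rest) = Eh P f (y - x) \<circ> Ecomp P f (y # rest)"
| "Ecomp P f _ = id"

definition partitions :: "real \<Rightarrow> real set set" where
  "partitions t = {\<pi>. finite \<pi> \<and> \<pi> \<subseteq> {0..} \<and> 0 \<in> \<pi> \<and> Max \<pi> = t}"

definition Epi :: "(real^'n^'n) set \<Rightarrow> (real^'n^'n \<Rightarrow> real^'n) \<Rightarrow> real set \<Rightarrow> real^'n \<Rightarrow> real^'n" where
  "Epi P f \<pi> = (if \<pi> = {0} then Eh P f 0 else Ecomp P f (sorted_list_of_set \<pi>))"

definition nisio :: "(real^'n^'n) set \<Rightarrow> (real^'n^'n \<Rightarrow> real^'n) \<Rightarrow> real \<Rightarrow> real^'n \<Rightarrow> real^'n" where
  "nisio P f t u0 = vsup ((\<lambda>\<pi>. Epi P f \<pi> u0) ` partitions t)"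

definition is_kernel :: "(real^'n \<Rightarrow> real^'n) \<Rightarrow> bool" where
  "is_kernel T \<longleftrightarrow> (\<forall>u v. u \<le> v \<longrightarrow> T u \<le> T v) \<and> (\<forall>\<alpha>. T (vec \<alpha>) = vec \<alpha>)"

definition is_convex_map :: "(real^'n \<Rightarrow> real^'n) \<Rightarrow> bool" where
  "is_convex_map T \<longleftrightarrow> (\<forall>i. convex_on UNIV (\<lambda>u. T u $ i))"

definition is_semigroup :: "(real \<Rightarrow> real^'n \<Rightarrow> real^'n) \<Rightarrow> bool" where
  "is_semigroup T \<longleftrightarrow> T 0 = id \<and> (\<forall>s t. s \<ge> 0 \<longrightarrow> t \<ge> 0 \<longrightarrow> T (s + t) = T s \<circ> T t)"

definition dominates :: "(real^'n^'n) set \<Rightarrow> (real^'n^'n \<Rightarrow> real^'n) \<Rightarrow> (real \<Rightarrow> real^'n \<Rightarrow> real^'n) \<Rightarrow> bool" where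
  "dominates P f T \<longleftrightarrow> (\<forall>t u0 q. t \<ge> 0 \<longrightarrow> q \<in> P \<longrightarrow> T t u0 \<ge> Sq f q t u0)"

definition is_semigroup_envelope :: "(real^'n^'n) set \<Rightarrow> (real^'n^'n \<Rightarrow> real^'n) \<Rightarrow> (real \<Rightarrow> real^'n \<Rightarrow> real^'n) \<Rightarrow> bool" where
  "is_semigroup_envelope P f T \<longleftrightarrow> is_semigroup T \<and> dominates P f T \<and>
     (\<forall>T'. is_semigroup T' \<and> dominates P f T' \<longrightarrow> (\<forall>t u0. t \<ge> 0 \<longrightarrow> T t u0 \<le> T' t u0))"

end

theory Submission
  imports Defs
begin


typedef (overloaded) ('n::finite) sqm = "UNIV :: ((real^'n) \<Rightarrow>\<^sub>L (real^'n)) set"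
  morphisms Rep_sqm Abs_sqm by auto

setup_lifting type_definition_sqm

instantiation sqm :: (finite) real_normed_vector
begin
lift_definition norm_sqm :: "'a sqm \<Rightarrow> real" is norm .
lift_definition minus_sqm :: "'a sqm \<Rightarrow> 'a sqm \<Rightarrow> 'a sqm" is "(-)" .
lift_definition plus_sqm :: "'a sqm \<Rightarrow> 'a sqm \<Rightarrow> 'a sqm" is "(+)" .
lift_definition uminus_sqm :: "'a sqm \<Rightarrow> 'a sqm" is "uminus" .
lift_definition zero_sqm :: "'a sqm" is "0" .
lift_definition scaleR_sqm :: "real \<Rightarrow> 'a sqm \<Rightarrow> 'a sqm" is "scaleR" .
definition dist_sqm :: "'a sqm \<Rightarrow> 'a sqm \<Rightarrow> real" where "dist_sqm a b = norm (a - b)"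
definition uniformity_sqm :: "('a sqm \<times> 'a sqm) filter" where
  "uniformity_sqm = (INF e\<in>{0 <..}. principal {(x, y). dist x y < e})"
definition open_sqm :: "'a sqm set \<Rightarrow> bool"
  where "open_sqm S = (\<forall>x\<in>S. \<forall>\<^sub>F (x', y) in uniformity. x' = x \<longrightarrow> y \<in> S)"
definition sgn_sqm :: "'a sqm \<Rightarrow> 'a sqm"
  where "sgn_sqm x = scaleR (inverse (norm x)) x"
instance
  apply standard
  unfolding dist_sqm_def open_sqm_def sgn_sqm_def uniformity_sqm_def
  apply (rule refl | (transfer, force simp: algebra_simps norm_triangle_ineq))+
  done
end

instance sqm :: (finite) banach
proof
  fix X :: "nat \<Rightarrow> 'a sqm"
  assume "Cauchy X"
  hence "Cauchy (\<lambda>n. Rep_sqm (X n))"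
    unfolding Cauchy_def dist_norm by transfer
  then obtain L where "(\<lambda>n. Rep_sqm (X n)) \<longlonglongrightarrow> L" using convergent_def Cauchy_convergent_iff by blast
  hence "X \<longlonglongrightarrow> Abs_sqm L"
    unfolding LIMSEQ_def dist_norm by transfer
  thus "convergent X" unfolding convergent_def by blast
qed

instantiation sqm :: (finite) real_normed_algebra_1
begin
lift_definition times_sqm :: "'a sqm \<Rightarrow> 'a sqm \<Rightarrow> 'a sqm" is "blinfun_compose" .
lift_definition one_sqm :: "'a sqm" is "id_blinfun" .
instance
  apply standard
  apply (transfer; rule blinfun_eqI; simp add: blinfun.bilinear_simps)+
    apply (transfer, metis norm_blinfun_id norm_zero zero_neq_one)
   apply (transfer, rule norm_blinfun_compose)
  apply (transfer, simp)
  done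
end


definition ap :: "'n::finite sqm \<Rightarrow> real^'n \<Rightarrow> real^'n" where
  "ap X v = blinfun_apply (Rep_sqm X) v"

definition Phi :: "real^'n^'n \<Rightarrow> 'n::finite sqm" where
  "Phi A = Abs_sqm (Blinfun (\<lambda>v. A *v v))"

definition Psi :: "'n::finite sqm \<Rightarrow> real^'n^'n" where
  "Psi X = matrix (ap X)"

lemma bl_mv: "bounded_linear ((*v) (A::real^'n::finite^'n))"
  using matrix_vector_mul_linear linear_conv_bounded_linear by blast

lemma ap_Phi[simp]: "ap (Phi A) v = A *v v"
  by (simp add: ap_def Phi_def Abs_sqm_inverse bounded_linear_Blinfun_apply bl_mv)

lemma ap_mult[simp]: "ap (X*Y) v = ap X (ap Y v)"
  by (simp add: ap_def times_sqm.rep_eq)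

lemma ap_one[simp]: "ap 1 v = v"
  by (simp add: ap_def one_sqm.rep_eq)

lemma ap_add[simp]: "ap (X+Y) v = ap X v + ap Y v"
  by (simp add: ap_def plus_sqm.rep_eq blinfun.add_left)

lemma ap_scaleR[simp]: "ap (c *\<^sub>R X) v = c *\<^sub>R ap X v"
  by (simp add: ap_def scaleR_sqm.rep_eq blinfun.scaleR_left)

lemma ap_norm: "norm (ap X v) \<le> norm X * norm v"
  by (simp add: ap_def norm_sqm.rep_eq norm_blinfun)

lemma ap_linear_v: "bounded_linear (ap X)"
  unfolding ap_def by (rule blinfun.bounded_linear_right)

lemma bl_ap: "bounded_linear (\<lambda>X. ap X v)"
  by (rule bounded_linear_intro[where K="norm v"]) (auto simp: ap_norm)

lemma sqm_eqI: "(\<And>v. ap X v = ap Y v) \<Longrightarrow> X = Y"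
  by (metis Rep_sqm_inject ap_def blinfun_eqI)

lemma Phi_mult: "Phi (A ** B) = Phi A * Phi B"
  by (rule sqm_eqI) (simp add: matrix_vector_mul_assoc)

lemma Phi_one: "Phi (mat 1) = 1"
  by (rule sqm_eqI) simp

lemma Phi_scale: "Phi (c *\<^sub>R A) = c *\<^sub>R Phi A"
  by (rule sqm_eqI) (simp add: scaleR_matrix_vector_assoc)

lemma Phi_add: "Phi (A + B) = Phi A + Phi B"
  by (rule sqm_eqI) (simp add: matrix_vector_mult_add_rdistrib)

lemma Phi_pow: "Phi (mpow A k) = Phi A ^ k"
  by (induct k) (simp_all add: Phi_mult Phi_one)

lemma Psi_Phi: "Psi (Phi A) = A"
proof -
  have "ap (Phi A) = (*v) A" by (rule ext) simp
  thus ?thesis by (simp add: Psi_def matrix_of_matrix_vector_mul)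
qed

lemma Psi_nth: "Psi X $ i $ j = ap X (axis j 1) $ i"
  by (simp add: Psi_def matrix_def)

lemma bl_Psi: "bounded_linear (Psi :: 'n::finite sqm \<Rightarrow> real^'n^'n)"
proof (rule bounded_linear_intro[where K="real CARD('n) * real CARD('n)"])
  fix X Y :: "'n sqm" and c :: real
  show "Psi (X + Y) = Psi X + Psi Y"
    by (simp add: vec_eq_iff Psi_nth)
  show "Psi (c *\<^sub>R X) = c *\<^sub>R Psi X"
    by (simp add: vec_eq_iff Psi_nth)
  have "norm (Psi X) \<le> (\<Sum>i\<in>UNIV. norm (Psi X $ i))"
    by (simp add: norm_vec_def L2_set_le_sum)
  also have "\<dots> \<le> (\<Sum>i\<in>(UNIV::'n set). \<Sum>j\<in>(UNIV::'n set). norm X)"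
  proof (rule sum_mono)
    fix i
    have "norm (Psi X $ i) \<le> (\<Sum>j\<in>UNIV. \<bar>Psi X $ i $ j\<bar>)" by (rule norm_le_l1_cart)
    also have "\<dots> \<le> (\<Sum>j\<in>(UNIV::'n set). norm X)"
    proof (rule sum_mono)
      fix j
      have "\<bar>Psi X $ i $ j\<bar> \<le> norm (ap X (axis j 1))"
        unfolding Psi_nth by (rule component_le_norm_cart)
      also have "\<dots> \<le> norm X" using ap_norm[of X "axis j 1"] by simp
      finally show "\<bar>Psi X $ i $ j\<bar> \<le> norm X" .
    qed
    finally show "norm (Psi X $ i) \<le> (\<Sum>j\<in>(UNIV::'n set). norm X)" .
  qed
  also have "\<dots> = norm X * (real CARD('n) * real CARD('n))" by simp
  finally show "norm (Psi X) \<le> norm X * (real CARD('n) * real CARD('n))" .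
qed

lemma mexp_Psi: "mexp A = Psi (exp (Phi A))"
proof -
  have s: "summable (\<lambda>k. Phi A ^ k /\<^sub>R fact k)" by (rule summable_exp_generic)
  have "Psi (exp (Phi A)) = (\<Sum>k. Psi (Phi A ^ k /\<^sub>R fact k))"
    unfolding exp_def using bounded_linear.suminf[OF bl_Psi s] by simp
  also have "\<dots> = (\<Sum>k. (1 / fact k) *\<^sub>R mpow A k)"
  proof -
    have "\<And>k. Psi (Phi A ^ k /\<^sub>R fact k) = (1 / fact k) *\<^sub>R mpow A k"
    proof -
      fix k
      have "Phi A ^ k /\<^sub>R fact k = Phi ((1 / fact k) *\<^sub>R mpow A k)"
        by (simp add: Phi_scale Phi_pow inverse_eq_divide)
      thus "Psi (Phi A ^ k /\<^sub>R fact k) = (1 / fact k) *\<^sub>R mpow A k"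
        by (simp add: Psi_Phi)
    qed
    thus ?thesis by simp
  qed
  finally show ?thesis by (simp add: mexp_def)
qed

lemma ap_Psi: "Psi X *v v = ap X v"
  unfolding Psi_def
  by (rule matrix_works) (simp add: linear_matrix_vector_mul_eq linear_conv_bounded_linear ap_linear_v)

lemma mexp_ap: "mexp A *v v = ap (exp (Phi A)) v"
  by (simp add: mexp_Psi ap_Psi)


lemma ap_zero_v[simp]: "ap X 0 = 0" by (simp add: ap_def)
lemma ap_scaleR_v[simp]: "ap X (c *\<^sub>R v) = c *\<^sub>R ap X v" by (simp add: ap_def blinfun.scaleR_right)
lemma ap_add_v[simp]: "ap X (u + v) = ap X u + ap X v" by (simp add: ap_def blinfun.add_right)
lemma ap_diff_v[simp]: "ap X (u - v) = ap X u - ap X v" by (simp add: ap_def blinfun.diff_right)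
lemma ap_neg_v[simp]: "ap X (- v) = - ap X v" by (simp add: ap_def blinfun.minus_right)

lemma exp_add_scale: "exp ((s+t) *\<^sub>R X) = exp (s *\<^sub>R X) * exp (t *\<^sub>R (X::'n::finite sqm))"
  by (simp add: scaleR_add_left exp_add_commuting)

lemma ap_exp_series: "ap (exp Y) v = (\<Sum>k. ap (Y ^ k /\<^sub>R fact k) v)"
  unfolding exp_def using bounded_linear.suminf[OF bl_ap summable_exp_generic] by simp

lemma summable_ap_exp: "summable (\<lambda>k. ap (Y ^ k /\<^sub>R fact k) v)"
  by (rule bounded_linear.summable[OF bl_ap summable_exp_generic])

lemma vec_nonneg_scale: "0 \<le> (x::real^'n) \<Longrightarrow> 0 \<le> c \<Longrightarrow> 0 \<le> c *\<^sub>R x"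
  by (simp add: less_eq_vec_def)

lemma mv_nonneg: "(\<forall>i j. 0 \<le> B$i$j) \<Longrightarrow> 0 \<le> w \<Longrightarrow> 0 \<le> B *v (w::real^'n::finite)"
  by (auto simp: less_eq_vec_def matrix_vector_mult_def intro!: sum_nonneg)

lemma pow_nonneg: "(\<forall>i j. 0 \<le> B$i$j) \<Longrightarrow> 0 \<le> v \<Longrightarrow> 0 \<le> ap (Phi B ^ k) (v::real^'n::finite)"
  by (induct k) (simp_all add: mv_nonneg)

lemma exp_nonneg_matrix:
  assumes B: "\<forall>i j. 0 \<le> B$i$j" and t: "0 \<le> t" and v: "0 \<le> v"
  shows "0 \<le> ap (exp (t *\<^sub>R Phi B)) (v::real^'n::finite)"
proof -
  let ?g = "\<lambda>k. ap ((t *\<^sub>R Phi B) ^ k /\<^sub>R fact k) v"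
  have tm: "0 \<le> ?g k" for k
  proof -
    have "?g k = (t ^ k / fact k) *\<^sub>R ap (Phi B ^ k) v"
      by (simp add: divide_inverse_commute)
    thus ?thesis using pow_nonneg[OF B v, of k] t by (simp add: vec_nonneg_scale)
  qed
  have s: "summable ?g" by (rule summable_ap_exp)
  show ?thesis
    unfolding ap_exp_series less_eq_vec_def
  proof
    fix i
    have "(\<Sum>k. ?g k) $ i = (\<Sum>k. ?g k $ i)"
      by (rule bounded_linear.suminf[OF bounded_linear_vec_nth s])
    moreover have "0 \<le> (\<Sum>k. ?g k $ i)"
      by (rule suminf_nonneg[OF bounded_linear.summable[OF bounded_linear_vec_nth s]])
         (use tm in \<open>simp add: less_eq_vec_def\<close>)
    ultimately show "0 $ i \<le> (\<Sum>k. ?g k) $ i" by simp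
  qed
qed

lemma exp_scalar_one: "exp (r *\<^sub>R (1::'n::finite sqm)) = exp r *\<^sub>R 1"
  using exp_of_real[of r, where 'a="'n sqm"] by (simp add: of_real_def)

lemma exp_Q_nonneg:
  assumes q: "is_Q_matrix q" and t: "0 \<le> t" and v: "0 \<le> v"
  shows "0 \<le> ap (exp (t *\<^sub>R Phi q)) (v::real^'n::finite)"
proof -
  define c where "c = (\<Sum>i\<in>UNIV. \<bar>q$i$i\<bar>)"
  define B where "B = q + c *\<^sub>R mat 1"
  have B: "\<forall>i j. 0 \<le> B$i$j"
  proof (intro allI)
    fix i j
    show "0 \<le> B$i$j"
    proof (cases "i = j")
      case True
      have "\<bar>q$i$i\<bar> \<le> c" unfolding c_def by (rule member_le_sum) auto
      thus ?thesis using True by (simp add: B_def mat_def)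
    next
      case False
      thus ?thesis using q by (simp add: B_def mat_def is_Q_matrix_def)
    qed
  qed
  have "t *\<^sub>R Phi q = t *\<^sub>R Phi B + (-(t*c)) *\<^sub>R 1"
    by (simp add: B_def Phi_add Phi_scale Phi_one algebra_simps)
  hence "exp (t *\<^sub>R Phi q) = exp (t *\<^sub>R Phi B + (-(t*c)) *\<^sub>R 1)" by (simp only:)
  also have "\<dots> = exp (t *\<^sub>R Phi B) * exp ((-(t*c)) *\<^sub>R 1)"
    by (rule exp_add_commuting) simp
  also have "\<dots> = exp (t *\<^sub>R Phi B) * (exp (-(t*c)) *\<^sub>R 1)" by (simp only: exp_scalar_one)
  finally have "exp (t *\<^sub>R Phi q) = exp (t *\<^sub>R Phi B) * (exp (-(t*c)) *\<^sub>R 1)" .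
  hence "ap (exp (t *\<^sub>R Phi q)) v = exp (-(t*c)) *\<^sub>R ap (exp (t *\<^sub>R Phi B)) v"
    by simp
  thus ?thesis using exp_nonneg_matrix[OF B t v] by (simp add: vec_nonneg_scale)
qed

lemma Q_const: "is_Q_matrix q \<Longrightarrow> q *v vec c = 0"
  by (simp add: is_Q_matrix_def vec_eq_iff matrix_vector_mult_def sum_distrib_right[symmetric])

lemma ap_exp_kernel:
  assumes "ap Y w = 0"
  shows "ap (exp Y) w = w"
proof -
  have "(\<lambda>k. ap (Y ^ k /\<^sub>R fact k) w) = (\<lambda>k. if k = 0 then w else 0)"
  proof
    fix k
    show "ap (Y ^ k /\<^sub>R fact k) w = (if k = 0 then w else 0)"
    proof (cases k)
      case 0 thus ?thesis by simp
    next
      case (Suc m)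
      have "ap (Y ^ k) w = ap (Y^m) (ap Y w)" by (simp only: Suc power_Suc2 ap_mult)
      hence "ap (Y ^ k) w = 0" using assms by simp
      thus ?thesis using Suc by simp
    qed
  qed
  moreover have "(\<lambda>k. if k = 0 then w else 0) sums w"
    using sums_single[of 0 "\<lambda>_. w"] by simp
  ultimately show ?thesis unfolding ap_exp_series by (simp add: sums_iff)
qed

lemma exp_Q_const:
  assumes q: "is_Q_matrix q"
  shows "ap (exp (t *\<^sub>R Phi q)) (vec c) = vec c"
  by (rule ap_exp_kernel) (simp add: Q_const[OF q])

lemma cont_ap_exp: "continuous_on S (\<lambda>s. ap (exp (s *\<^sub>R X)) w)"
proof -
  have "continuous_on S (\<lambda>s. exp (s *\<^sub>R X))"
  proof (rule continuous_at_imp_continuous_on, rule ballI)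
    fix s
    show "isCont (\<lambda>s. exp (s *\<^sub>R X)) s"
      using exp_scaleR_has_vector_derivative_right[where t=s and A=X and T=UNIV] by (rule has_vector_derivative_continuous)
  qed
  thus ?thesis by (rule bounded_linear.continuous_on[OF bl_ap])
qed

lemma Sq_eq: "Sq f q t u = ap (exp (t *\<^sub>R Phi q)) u + integral {0..t} (\<lambda>s. ap (exp (s *\<^sub>R Phi q)) (f q))"
  by (simp add: Sq_def mexp_ap Phi_scale)

lemma Sq_zero_time: "Sq f q 0 u = u"
  by (simp add: Sq_eq)

lemma integrable_g: "(\<lambda>r. ap (exp (r *\<^sub>R X)) w) integrable_on {a..b}"
  by (rule integrable_continuous_interval[OF cont_ap_exp])

lemma Sq_comp:
  assumes s: "0 \<le> s" and t: "0 \<le> t"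
  shows "Sq f q (s+t) u = Sq f q s (Sq f q t u)"
proof -
  define X where "X = Phi q"
  define g where "g = (\<lambda>r. ap (exp (r *\<^sub>R X)) (f q))"
  have int: "g integrable_on {a..b}" for a b unfolding g_def by (rule integrable_g)
  have "ap (exp (s *\<^sub>R X)) (integral {0..t} g) = integral {0..t} (ap (exp (s *\<^sub>R X)) \<circ> g)"
    by (rule integral_linear[OF int ap_linear_v, symmetric])
  also have "ap (exp (s *\<^sub>R X)) \<circ> g = g \<circ> (+) s"
    by (rule ext) (simp add: g_def exp_add_scale)
  also have "integral {0..t} (g \<circ> (+) s) = integral {0+s..t+s} g"
    by (rule integral_shift_Icc_real)
  finally have sh: "ap (exp (s *\<^sub>R X)) (integral {0..t} g) = integral {s..s+t} g" by (simp add: add.commute)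
  have comb: "integral {0..s} g + integral {s..s+t} g = integral {0..s+t} g"
    by (rule Henstock_Kurzweil_Integration.integral_combine) (use s t int in auto)
  have e: "ap (exp ((s+t) *\<^sub>R X)) u = ap (exp (s *\<^sub>R X)) (ap (exp (t *\<^sub>R X)) u)"
    by (simp only: exp_add_scale ap_mult)
  show ?thesis
    unfolding Sq_eq X_def[symmetric] g_def[symmetric] ap_add_v e sh comb[symmetric]
    by (simp only: add_ac)
qed

lemma Sq_mono:
  assumes q: "is_Q_matrix q" and t: "0 \<le> t" and uv: "u \<le> v"
  shows "Sq f q t u \<le> Sq f q t v"
proof -
  have "0 \<le> ap (exp (t *\<^sub>R Phi q)) (v - u)"
    by (rule exp_Q_nonneg[OF q t]) (use uv in \<open>simp add: less_eq_vec_def\<close>)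
  thus ?thesis by (simp add: Sq_eq less_eq_vec_def)
qed

lemma Sq_transl:
  assumes q: "is_Q_matrix q"
  shows "Sq f q t (u + vec c) = Sq f q t u + vec c"
  by (simp add: Sq_eq exp_Q_const[OF q] algebra_simps)

lemma Sq_affine:
  "Sq f q t (a *\<^sub>R u + (1-a) *\<^sub>R v) = a *\<^sub>R Sq f q t u + (1-a) *\<^sub>R Sq f q t v"
  by (simp add: Sq_eq algebra_simps)

lemma Sq_zero_le:
  assumes q: "is_Q_matrix q" and t: "0 \<le> t" and fq: "f q \<le> 0"
  shows "Sq f q t 0 \<le> 0"
proof -
  define g where "g = (\<lambda>r. ap (exp (r *\<^sub>R Phi q)) (- f q))"
  have int: "g integrable_on {a..b}" for a b unfolding g_def by (rule integrable_g)
  have gnn: "0 \<le> g r" if "r \<in> {0..t}" for r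
    unfolding g_def by (rule exp_Q_nonneg[OF q]) (use that fq in \<open>auto simp: less_eq_vec_def\<close>)
  have I0: "0 \<le> integral {0..t} g"
    unfolding less_eq_vec_def
  proof
    fix i
    have "integral {0..t} ((\<lambda>x. x $ i) \<circ> g) = integral {0..t} g $ i"
      by (rule integral_linear[OF int bounded_linear_vec_nth])
    moreover have "0 \<le> integral {0..t} ((\<lambda>x. x $ i) \<circ> g)"
      by (rule integral_nonneg[OF integrable_linear[OF int bounded_linear_vec_nth]])
         (use gnn in \<open>auto simp: less_eq_vec_def\<close>)
    ultimately show "0 $ i \<le> integral {0..t} g $ i" by simp
  qed
  have I1: "integral {0..t} g = - integral {0..t} (\<lambda>s. ap (exp (s *\<^sub>R Phi q)) (f q))"
    unfolding g_def ap_neg_v by (rule integral_neg)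
  have I2: "Sq f q t 0 = integral {0..t} (\<lambda>s. ap (exp (s *\<^sub>R Phi q)) (f q))"
    by (simp add: Sq_eq)
  have "Sq f q t 0 = - integral {0..t} g" using I1 I2 by simp
  thus ?thesis using I0 by (simp add: less_eq_vec_def)
qed

lemma Sq_zero_q0: "f q = 0 \<Longrightarrow> Sq f q t 0 = 0"
  by (simp add: Sq_eq)




lemma vsup_upper: "v \<in> A \<Longrightarrow> (\<forall>w\<in>A. w \<le> b) \<Longrightarrow> v \<le> vsup A"
  unfolding less_eq_vec_def vsup_def
  by (auto intro!: cSUP_upper bdd_aboveI[where M="b $ _"])

lemma vsup_least: "A \<noteq> {} \<Longrightarrow> (\<forall>w\<in>A. w \<le> b) \<Longrightarrow> vsup A \<le> b"
  unfolding less_eq_vec_def vsup_def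
  by (auto intro!: cSUP_least)

lemma vsup_approx:
  assumes "A \<noteq> {}" "\<forall>w\<in>A. w \<le> b" "0 < e"
  shows "\<exists>w\<in>A. vsup A $ i < w $ i + e"
proof -
  have bdd: "bdd_above ((\<lambda>w. w $ i) ` A)"
    using assms(2) by (auto simp: less_eq_vec_def intro!: bdd_aboveI[where M="b $ i"])
  have "vsup A $ i - e < (SUP w\<in>A. w $ i)" using assms(3) by (simp add: vsup_def)
  then obtain w where "w \<in> A" "vsup A $ i - e < w $ i"
    using less_cSUP_iff[OF assms(1) bdd] by blast
  thus ?thesis by force
qed

lemma vsup_single: "vsup {v} = v"
  by (simp add: vsup_def vec_eq_iff)

lemma Ecomp_append: "Ecomp P f (xs @ [a]) \<circ> Ecomp P f (a # ys) = Ecomp P f (xs @ a # ys)"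
proof (induction xs)
  case Nil thus ?case by simp
next
  case (Cons x xs)
  show ?case
  proof (cases xs)
    case Nil thus ?thesis by (simp add: comp_assoc)
  next
    case (Cons y zs)
    thus ?thesis using Cons.IH by (simp add: fun_eq_iff)
  qed
qed

lemma Ecomp_shift: "Ecomp P f (map (\<lambda>r. r + c) xs) = Ecomp P f xs"
  by (induction P f xs rule: Ecomp.induct) simp_all

lemma sw_hd_le: "sorted_wrt (<) xs \<Longrightarrow> x \<in> set xs \<Longrightarrow> hd xs \<le> (x::real)"
  by (cases xs) auto

lemma sw_le_last: "sorted_wrt (<) xs \<Longrightarrow> x \<in> set xs \<Longrightarrow> x \<le> last (xs::real list)"
proof (induction xs)
  case Nil thus ?case by simp
next
  case (Cons a xs)
  show ?case
  proof (cases xs)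
    case Nil thus ?thesis using Cons by simp
  next
    case (Cons b ys)
    hence "last xs \<in> set xs" by simp
    thus ?thesis using Cons.prems Cons.IH \<open>xs = b # ys\<close> by (auto simp: less_imp_le)
  qed
qed

definition Lt :: "real \<Rightarrow> real list set" where
  "Lt t = {xs. sorted_wrt (<) xs \<and> xs \<noteq> [] \<and> hd xs = 0 \<and> last xs = t}"

lemma Lt_part:
  assumes "xs \<in> Lt t"
  shows "set xs \<in> partitions t" "sorted_list_of_set (set xs) = xs"
proof -
  have sw: "sorted_wrt (<) xs" and ne: "xs \<noteq> []" and h: "hd xs = 0" and l: "last xs = t"
    using assms by (auto simp: Lt_def)
  have "\<forall>x\<in>set xs. 0 \<le> x" using sw_hd_le[OF sw] h by auto
  moreover have "0 \<in> set xs" using h ne hd_in_set by metis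
  moreover have "Max (set xs) = t"
    by (rule Max_eqI) (use sw_le_last[OF sw] l ne last_in_set in auto)
  ultimately show "set xs \<in> partitions t" by (auto simp: partitions_def)
  show "sorted_list_of_set (set xs) = xs"
    using sw by (simp add: sorted_list_of_set.idem_if_sorted_distinct strict_sorted_iff)
qed

lemma part_Lt:
  assumes "A \<in> partitions t"
  shows "sorted_list_of_set A \<in> Lt t" "set (sorted_list_of_set A) = A"
proof -
  let ?L = "sorted_list_of_set A"
  have fin: "finite A" and pos: "A \<subseteq> {0..}" and z: "0 \<in> A" and m: "Max A = t"
    using assms by (auto simp: partitions_def)
  show st: "set ?L = A" using fin by simp
  have sw: "sorted_wrt (<) ?L" by (rule strict_sorted_list_of_set)
  have ne: "?L \<noteq> []" using st z by auto
  have "hd ?L \<le> 0" using sw_hd_le[OF sw] st z by auto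
  moreover have "hd ?L \<in> A" using ne st hd_in_set by metis
  ultimately have h: "hd ?L = 0" using pos by force
  have "t \<le> last ?L" using sw_le_last[OF sw] st m fin z Max_in by (metis empty_iff)
  moreover have "last ?L \<le> t" using ne st last_in_set m fin by (metis Max_ge)
  ultimately have "last ?L = t" by simp
  thus "?L \<in> Lt t" using sw ne h by (simp add: Lt_def)
qed

lemma Lt_last_ge_hd: "xs \<in> Lt t \<Longrightarrow> 0 \<le> t"
  by (metis (mono_tags, lifting) Lt_def last_in_set mem_Collect_eq sw_hd_le)

lemma Lt_zero: "Lt 0 = {[0]}"
proof -
  have "xs = [0]" if "xs \<in> Lt 0" for xs
  proof -
    have sw: "sorted_wrt (<) xs" and ne: "xs \<noteq> []" and h: "hd xs = 0" and l: "last xs = 0"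
      using that by (auto simp: Lt_def)
    obtain a ys where xs: "xs = a # ys" using ne by (cases xs) auto
    have "ys = []"
    proof (rule ccontr)
      assume "ys \<noteq> []"
      hence "last xs \<in> set ys" "last xs = last ys" using xs by auto
      hence "a < last xs" using sw xs by auto
      thus False using h l xs \<open>ys \<noteq> []\<close> by simp
    qed
    thus ?thesis using xs h by simp
  qed
  thus ?thesis by (auto simp: Lt_def)
qed

lemma Lt_two: "0 < t \<Longrightarrow> [0, t] \<in> Lt t"
  by (simp add: Lt_def)

lemma Lt_concat:
  assumes xs: "xs \<in> Lt a" and ys: "ys \<in> Lt b"
  shows "xs @ tl (map (\<lambda>r. r + a) ys) \<in> Lt (a+b)"
    "Ecomp P f (xs @ tl (map (\<lambda>r. r + a) ys)) = Ecomp P f xs \<circ> Ecomp P f ys"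
proof -
  have swx: "sorted_wrt (<) xs" and nex: "xs \<noteq> []" and hx: "hd xs = 0" and lx: "last xs = a"
    using xs by (auto simp: Lt_def)
  have swy: "sorted_wrt (<) ys" and ney: "ys \<noteq> []" and hy: "hd ys = 0" and ly: "last ys = b"
    using ys by (auto simp: Lt_def)
  obtain ys' where ysd: "ys = 0 # ys'" using ney hy by (cases ys) auto
  have xsd: "xs = butlast xs @ [a]" using nex lx append_butlast_last_id by metis
  have eq: "xs @ tl (map (\<lambda>r. r + a) ys) = butlast xs @ a # map (\<lambda>r. r + a) ys'"
    using xsd ysd by (metis append.assoc append_Cons append_Nil list.sel(3) list.simps(9))
  have "Ecomp P f (butlast xs @ a # map (\<lambda>r. r + a) ys') = Ecomp P f xs \<circ> Ecomp P f (a # map (\<lambda>r. r + a) ys')"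
    using Ecomp_append[of P f "butlast xs" a] xsd by metis
  moreover have "Ecomp P f (a # map (\<lambda>r. r + a) ys') = Ecomp P f ys"
    using Ecomp_shift[of P f a ys] ysd by simp
  ultimately show "Ecomp P f (xs @ tl (map (\<lambda>r. r + a) ys)) = Ecomp P f xs \<circ> Ecomp P f ys"
    using eq by simp
  have pos: "\<forall>r\<in>set ys'. 0 < r" using swy ysd by simp
  have le: "\<forall>x\<in>set xs. x \<le> a" using sw_le_last[OF swx] lx by simp
  have sw: "sorted_wrt (<) (xs @ tl (map (\<lambda>r. r + a) ys))"
    using swx swy pos le ysd by (force simp: sorted_wrt_append sorted_wrt_map)
  have hd: "hd (xs @ tl (map (\<lambda>r. r + a) ys)) = 0" using nex hx by simp
  have "last (xs @ tl (map (\<lambda>r. r + a) ys)) = a + b"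
  proof (cases ys')
    case Nil
    thus ?thesis using ysd ly lx by simp
  next
    case (Cons c cs)
    hence "last ys = last ys'" using ysd by simp
    thus ?thesis using ysd Cons ly by (auto simp: last_map split: if_splits)
  qed
  thus "xs @ tl (map (\<lambda>r. r + a) ys) \<in> Lt (a+b)" using sw hd nex by (simp add: Lt_def)
qed

lemma Lt_split:
  assumes zs: "zs \<in> Lt (s+t)" and sin: "s \<in> set zs"
  shows "\<exists>xs\<in>Lt s. \<exists>ys\<in>Lt t. Ecomp P f zs = Ecomp P f xs \<circ> Ecomp P f ys"
proof -
  have sw: "sorted_wrt (<) zs" and ne: "zs \<noteq> []" and h: "hd zs = 0" and l: "last zs = s + t"
    using zs by (auto simp: Lt_def)
  obtain l1 l2 where zd: "zs = l1 @ s # l2" using split_list[OF sin] by blast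
  define xs where "xs = l1 @ [s]"
  define ys where "ys = map (\<lambda>r. r - s) (s # l2)"
  have "Ecomp P f zs = Ecomp P f xs \<circ> Ecomp P f (s # l2)"
    unfolding zd xs_def by (rule Ecomp_append[symmetric])
  moreover have "s # l2 = map (\<lambda>r. r + s) ys" by (simp add: ys_def comp_def)
  hence "Ecomp P f (s # l2) = Ecomp P f ys" by (simp add: Ecomp_shift)
  moreover have "xs \<in> Lt s"
  proof -
    have "sorted_wrt (<) xs" using sw zd by (auto simp: xs_def sorted_wrt_append)
    moreover have "hd xs = 0" using h zd by (cases l1) (auto simp: xs_def)
    ultimately show ?thesis by (simp add: Lt_def xs_def)
  qed
  moreover have "ys \<in> Lt t"
  proof -
    have "sorted_wrt (<) ys" using sw zd by (auto simp: ys_def sorted_wrt_append sorted_wrt_map)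
    moreover have "last (s # l2) = s + t" using l zd by simp
    hence "last ys = t" by (cases "l2 = []") (auto simp: ys_def last_map)
    ultimately show ?thesis by (simp add: Lt_def ys_def)
  qed
  ultimately show ?thesis by auto
qed




definition mx :: "real^'n::finite \<Rightarrow> real" where "mx u = Max (range (\<lambda>i. u $ i))"

lemma le_mx: "u \<le> vec (mx u)"
  by (simp add: less_eq_vec_def mx_def)

lemma vec_add_le: "(u::real^'n) \<le> v \<Longrightarrow> u + w \<le> v + w"
  by (simp add: less_eq_vec_def)

locale nis =
  fixes P :: "(real^'n::finite^'n) set" and f :: "real^'n^'n \<Rightarrow> real^'n" and q0 :: "real^'n^'n"
  assumes Q: "\<forall>q\<in>P. is_Q_matrix q" and q0: "q0 \<in> P" and fq0: "f q0 = 0"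
    and fle: "\<forall>q\<in>P. f q \<le> 0"
begin

lemma Sq_const_le: "q \<in> P \<Longrightarrow> 0 \<le> h \<Longrightarrow> Sq f q h (vec c) \<le> vec c"
  using Sq_transl[of q f h 0 c] Sq_zero_le[of q h f] Q fle
  by (simp add: less_eq_vec_def)

lemma Sq_bound: "q \<in> P \<Longrightarrow> 0 \<le> h \<Longrightarrow> Sq f q h u \<le> vec (mx u)"
  using Sq_mono[of q h u "vec (mx u)" f] Sq_const_le[of q h "mx u"] Q le_mx order_trans by blast

lemma Eh_ub: "q \<in> P \<Longrightarrow> 0 \<le> h \<Longrightarrow> Sq f q h u \<le> Eh P f h u"
  unfolding Eh_def by (rule vsup_upper) (auto intro: Sq_bound)

lemma Eh_least: "0 \<le> h \<Longrightarrow> (\<And>q. q \<in> P \<Longrightarrow> Sq f q h u \<le> w) \<Longrightarrow> Eh P f h u \<le> w"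
  unfolding Eh_def by (rule vsup_least) (use q0 in auto)

lemma Eh_bound: "0 \<le> h \<Longrightarrow> Eh P f h u \<le> vec (mx u)"
  by (rule Eh_least) (auto intro: Sq_bound)

lemma Eh_mono: "0 \<le> h \<Longrightarrow> u \<le> v \<Longrightarrow> Eh P f h u \<le> Eh P f h v"
proof (rule Eh_least)
  fix q assume h: "0 \<le> h" and uv: "u \<le> v" and q: "q \<in> P"
  have "Sq f q h u \<le> Sq f q h v" using Sq_mono[of q h u v f] Q q h uv by blast
  also have "\<dots> \<le> Eh P f h v" by (rule Eh_ub[OF q h])
  finally show "Sq f q h u \<le> Eh P f h v" .
qed

lemma Eh_transl: "0 \<le> h \<Longrightarrow> Eh P f h (u + vec c) = Eh P f h u + vec c"
proof (rule antisym)
  assume h: "0 \<le> h"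
  show "Eh P f h (u + vec c) \<le> Eh P f h u + vec c"
    by (rule Eh_least[OF h]) (simp add: Sq_transl Q vec_add_le Eh_ub h)
  have "Eh P f h u \<le> Eh P f h (u + vec c) - vec c"
  proof (rule Eh_least[OF h])
    fix q assume q: "q \<in> P"
    have "Sq f q h u = Sq f q h (u + vec c) - vec c" using Sq_transl[of q f h u c] Q q by simp
    also have "\<dots> \<le> Eh P f h (u + vec c) - vec c"
      using Eh_ub[OF q h, of "u + vec c"] by (simp add: less_eq_vec_def)
    finally show "Sq f q h u \<le> Eh P f h (u + vec c) - vec c" .
  qed
  thus "Eh P f h u + vec c \<le> Eh P f h (u + vec c)" unfolding less_eq_vec_def by (simp add: le_diff_eq)
qed

lemma Eh_const: "0 \<le> h \<Longrightarrow> Eh P f h (vec c) = vec c"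
proof (rule antisym)
  assume h: "0 \<le> h"
  show "Eh P f h (vec c) \<le> vec c" by (rule Eh_least[OF h]) (rule Sq_const_le[OF _ h])
  have "Sq f q0 h (vec c) = vec c" using Sq_transl[of q0 f h 0 c] Sq_zero_q0[of f q0 h] fq0 Q q0 by simp
  thus "vec c \<le> Eh P f h (vec c)" using Eh_ub[OF q0 h, of "vec c"] by simp
qed

lemma Eh_zero: "Eh P f 0 u = u"
proof (rule antisym)
  show "Eh P f 0 u \<le> u" by (rule Eh_least) (simp_all add: Sq_zero_time)
  show "u \<le> Eh P f 0 u" using Eh_ub[OF q0, of 0 u] by (simp add: Sq_zero_time)
qed

lemma Eh_split: "0 \<le> a \<Longrightarrow> 0 \<le> b \<Longrightarrow> Eh P f (a + b) u \<le> Eh P f a (Eh P f b u)"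
proof (rule Eh_least)
  fix q assume a: "0 \<le> a" and b: "0 \<le> b" and q: "q \<in> P"
  have "Sq f q (a+b) u = Sq f q a (Sq f q b u)" by (rule Sq_comp[OF a b])
  also have "\<dots> \<le> Sq f q a (Eh P f b u)" using Sq_mono Q q a Eh_ub[OF q b] by blast
  also have "\<dots> \<le> Eh P f a (Eh P f b u)" by (rule Eh_ub[OF q a])
  finally show "Sq f q (a+b) u \<le> Eh P f a (Eh P f b u)" .
qed simp

lemma cvx_comb_le: "0 \<le> a \<Longrightarrow> a \<le> 1 \<Longrightarrow> (x::real^'n) \<le> x' \<Longrightarrow> y \<le> y' \<Longrightarrow>
    a *\<^sub>R x + (1-a) *\<^sub>R y \<le> a *\<^sub>R x' + (1-a) *\<^sub>R y'"
  by (simp add: less_eq_vec_def add_mono mult_left_mono)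

lemma Eh_convex: "0 \<le> h \<Longrightarrow> 0 \<le> a \<Longrightarrow> a \<le> 1 \<Longrightarrow>
    Eh P f h (a *\<^sub>R u + (1-a) *\<^sub>R v) \<le> a *\<^sub>R Eh P f h u + (1-a) *\<^sub>R Eh P f h v"
  by (rule Eh_least) (simp_all add: Sq_affine cvx_comb_le Eh_ub)

lemma Ecomp_mono: "sorted_wrt (<) xs \<Longrightarrow> u \<le> v \<Longrightarrow> Ecomp P f xs u \<le> Ecomp P f xs v"
  by (induction xs rule: induct_list012) (auto intro!: Eh_mono)

lemma Ecomp_transl: "sorted_wrt (<) xs \<Longrightarrow> Ecomp P f xs (u + vec c) = Ecomp P f xs u + vec c"
  by (induction xs rule: induct_list012) (auto simp: Eh_transl)

lemma Ecomp_const: "sorted_wrt (<) xs \<Longrightarrow> Ecomp P f xs (vec c) = vec c"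
  by (induction xs rule: induct_list012) (auto simp: Eh_const)

lemma Ecomp_bound: "sorted_wrt (<) xs \<Longrightarrow> Ecomp P f xs u \<le> vec (mx u)"
  using Ecomp_mono[OF _ le_mx, of xs u] Ecomp_const[of xs "mx u"] by simp

lemma Ecomp_convex: "sorted_wrt (<) xs \<Longrightarrow> 0 \<le> a \<Longrightarrow> a \<le> 1 \<Longrightarrow>
    Ecomp P f xs (a *\<^sub>R u + (1-a) *\<^sub>R v) \<le> a *\<^sub>R Ecomp P f xs u + (1-a) *\<^sub>R Ecomp P f xs v"
proof (induction xs rule: induct_list012)
  case (3 x y rest)
  hence IH: "Ecomp P f (y # rest) (a *\<^sub>R u + (1-a) *\<^sub>R v) \<le> a *\<^sub>R Ecomp P f (y # rest) u + (1-a) *\<^sub>R Ecomp P f (y # rest) v"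
    by simp
  have h: "0 \<le> y - x" using 3 by simp
  have "Ecomp P f (x # y # rest) (a *\<^sub>R u + (1-a) *\<^sub>R v) \<le> Eh P f (y - x) (a *\<^sub>R Ecomp P f (y # rest) u + (1-a) *\<^sub>R Ecomp P f (y # rest) v)"
    using Eh_mono[OF h IH] by simp
  also have "\<dots> \<le> a *\<^sub>R Ecomp P f (x # y # rest) u + (1-a) *\<^sub>R Ecomp P f (x # y # rest) v"
    using Eh_convex[OF h 3(4,5)] by simp
  finally show ?case .
qed simp_all

end



context nis
begin

lemma Ecomp_refine:
  "sorted_wrt (<) ys \<Longrightarrow> sorted_wrt (<) xs \<Longrightarrow> xs \<noteq> [] \<Longrightarrow> hd xs = hd ys \<Longrightarrow>
   last xs = last ys \<Longrightarrow> set xs \<subseteq> set ys \<Longrightarrow> Ecomp P f xs u \<le> Ecomp P f ys u"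
proof (induction ys arbitrary: xs)
  case Nil thus ?case by simp
next
  case (Cons y ys')
  obtain x0 xs' where xsd: "xs = x0 # xs'" using Cons.prems(3) by (cases xs) auto
  have x0: "x0 = y" using Cons.prems(4) xsd by simp
  show ?case
  proof (cases ys')
    case Nil
    have "xs' = []"
    proof (rule ccontr)
      assume "xs' \<noteq> []"
      then obtain z where "z \<in> set xs'" by (cases xs') auto
      hence "y < z" "z \<in> set (y # ys')" using Cons.prems(2,6) xsd x0 by auto
      thus False using Nil by simp
    qed
    thus ?thesis using xsd x0 Nil by simp
  next
    case (Cons y1 ys'')
    have swys: "sorted_wrt (<) ys'" and yl: "\<forall>z\<in>set ys'. y < z" using Cons.prems(1) \<open>ys' = y1 # ys''\<close> by auto
    have lastys: "last (y # ys') = last ys'" using \<open>ys' = y1 # ys''\<close> by simp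
    have "xs' \<noteq> []"
    proof
      assume "xs' = []"
      hence "last xs = y" using xsd x0 by simp
      moreover have "last ys' \<in> set ys'" using \<open>ys' = y1 # ys''\<close> by simp
      ultimately show False using Cons.prems(5) lastys yl by force
    qed
    then obtain x1 xs'' where xs'd: "xs' = x1 # xs''" by (cases xs') auto
    have swx: "sorted_wrt (<) (x1 # xs'')" and xl: "y < x1" "\<forall>z\<in>set xs''. x1 < z"
      using Cons.prems(2) xsd xs'd x0 by auto
    have sub: "set (x1 # xs'') \<subseteq> set ys'"
    proof
      fix z assume z: "z \<in> set (x1 # xs'')"
      hence "y < z" using xl by auto
      moreover have "z \<in> set (y # ys')" using z Cons.prems(6) xsd xs'd by auto
      ultimately show "z \<in> set ys'" by auto
    qed
    have x1ge: "y1 \<le> x1" using sub sw_hd_le[OF swys, of x1] \<open>ys' = y1 # ys''\<close> by auto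
    have lastx: "last (x1 # xs'') = last ys'" using Cons.prems(5) xsd xs'd lastys by simp
    have h1: "0 \<le> y1 - y" using yl \<open>ys' = y1 # ys''\<close> by auto
    have eqy: "Ecomp P f (y # ys') u = Eh P f (y1 - y) (Ecomp P f ys' u)" using \<open>ys' = y1 # ys''\<close> by simp
    have eqx: "Ecomp P f xs u = Eh P f (x1 - y) (Ecomp P f (x1 # xs'') u)" using xsd xs'd x0 by simp
    show ?thesis
    proof (cases "x1 = y1")
      case True
      have "Ecomp P f (x1 # xs'') u \<le> Ecomp P f ys' u"
        by (rule Cons.IH[OF swys swx]) (use True sub lastx \<open>ys' = y1 # ys''\<close> in auto)
      thus ?thesis using eqx eqy True Eh_mono[OF h1] by simp
    next
      case False
      hence lt: "y1 < x1" using x1ge by simp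
      have swz: "sorted_wrt (<) (y1 # x1 # xs'')" using swx lt xl by auto
      have "Ecomp P f (y1 # x1 # xs'') u \<le> Ecomp P f ys' u"
        by (rule Cons.IH[OF swys swz]) (use sub lastx \<open>ys' = y1 # ys''\<close> in auto)
      hence A: "Eh P f (x1 - y1) (Ecomp P f (x1 # xs'') u) \<le> Ecomp P f ys' u" by simp
      have "Ecomp P f xs u \<le> Eh P f (y1 - y) (Eh P f (x1 - y1) (Ecomp P f (x1 # xs'') u))"
        using eqx Eh_split[OF h1, of "x1 - y1" "Ecomp P f (x1 # xs'') u"] lt by simp
      also have "\<dots> \<le> Ecomp P f (y # ys') u" using eqy Eh_mono[OF h1 A] by simp
      finally show ?thesis .
    qed
  qed
qed

end


context nis begin
lemma nisio_Lt: "nisio P f t u = vsup ((\<lambda>xs. Ecomp P f xs u) ` Lt t)"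
proof -
  have "(\<lambda>\<pi>. Epi P f \<pi> u) ` partitions t = (\<lambda>xs. Ecomp P f xs u) ` Lt t"
  proof
    show "(\<lambda>\<pi>. Epi P f \<pi> u) ` partitions t \<subseteq> (\<lambda>xs. Ecomp P f xs u) ` Lt t"
    proof
      fix w assume "w \<in> (\<lambda>\<pi>. Epi P f \<pi> u) ` partitions t"
      then obtain \<pi> where pi: "\<pi> \<in> partitions t" and w: "w = Epi P f \<pi> u" by blast
      have "Epi P f \<pi> u = Ecomp P f (sorted_list_of_set \<pi>) u"
      proof (cases "\<pi> = {0}")
        case True thus ?thesis by (simp add: Epi_def Eh_zero)
      next
        case False thus ?thesis by (simp add: Epi_def)
      qed
      thus "w \<in> (\<lambda>xs. Ecomp P f xs u) ` Lt t"
        by (intro rev_image_eqI[OF part_Lt(1)[OF pi]]) (simp add: w)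
    qed
    show "(\<lambda>xs. Ecomp P f xs u) ` Lt t \<subseteq> (\<lambda>\<pi>. Epi P f \<pi> u) ` partitions t"
    proof
      fix w assume "w \<in> (\<lambda>xs. Ecomp P f xs u) ` Lt t"
      then obtain xs where xs: "xs \<in> Lt t" and w: "w = Ecomp P f xs u" by blast
      have "Epi P f (set xs) u = Ecomp P f xs u"
      proof (cases "set xs = {0}")
        case True
        hence "xs = [0]" using Lt_part(2)[OF xs] by simp
        thus ?thesis by (simp add: Epi_def Eh_zero)
      next
        case False thus ?thesis using Lt_part(2)[OF xs] by (simp add: Epi_def)
      qed
      thus "w \<in> (\<lambda>\<pi>. Epi P f \<pi> u) ` partitions t"
        by (intro rev_image_eqI[OF Lt_part(1)[OF xs]]) (simp add: w)
    qed
  qed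
  thus ?thesis by (simp only: nisio_def)
qed

lemma Lt_ne: "0 \<le> t \<Longrightarrow> Lt t \<noteq> {}"
proof (cases "t = 0")
  case True thus ?thesis by (simp add: Lt_zero)
next
  case False
  assume "0 \<le> t"
  hence "[0, t] \<in> Lt t" using False Lt_two by simp
  thus ?thesis by blast
qed

lemma Lt_sw: "xs \<in> Lt t \<Longrightarrow> sorted_wrt (<) xs"
  by (simp add: Lt_def)

lemma N_upper: "xs \<in> Lt t \<Longrightarrow> Ecomp P f xs u \<le> nisio P f t u"
  unfolding nisio_Lt by (rule vsup_upper) (auto intro: Ecomp_bound Lt_sw)

lemma N_least: "0 \<le> t \<Longrightarrow> (\<And>xs. xs \<in> Lt t \<Longrightarrow> Ecomp P f xs u \<le> w) \<Longrightarrow> nisio P f t u \<le> w"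
  unfolding nisio_Lt by (rule vsup_least) (use Lt_ne in auto)

end


context nis begin
lemma N_approx:
  assumes t: "0 \<le> t" and e: "0 < e"
  shows "\<exists>zs\<in>Lt t. nisio P f t u \<le> Ecomp P f zs u + vec e"
proof -
  have "\<forall>i. \<exists>xs. xs \<in> Lt t \<and> nisio P f t u $ i < Ecomp P f xs u $ i + e"
  proof
    fix i
    obtain w where w: "w \<in> (\<lambda>xs. Ecomp P f xs u) ` Lt t" "vsup ((\<lambda>xs. Ecomp P f xs u) ` Lt t) $ i < w $ i + e"
      using vsup_approx[of "(\<lambda>xs. Ecomp P f xs u) ` Lt t" "vec (mx u)" e i] Lt_ne[OF t] e
      by (auto intro: Ecomp_bound Lt_sw)
    thus "\<exists>xs. xs \<in> Lt t \<and> nisio P f t u $ i < Ecomp P f xs u $ i + e" unfolding nisio_Lt by auto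
  qed
  then obtain xs where xsH: "\<forall>i. xs i \<in> Lt t \<and> nisio P f t u $ i < Ecomp P f (xs i) u $ i + e"
    using choice[OF \<open>\<forall>i. \<exists>xs. _\<close>] by blast
  have xs: "\<And>i. xs i \<in> Lt t" "\<And>i. nisio P f t u $ i < Ecomp P f (xs i) u $ i + e"
    using xsH by auto
  define A where "A = (\<Union>i. set (xs i))"
  have "A \<in> partitions t"
  proof -
    have p: "\<And>i. set (xs i) \<in> partitions t" using Lt_part(1)[OF xs(1)] by blast
    have "finite A" unfolding A_def using p by (auto simp: partitions_def)
    moreover have "A \<subseteq> {0..}" "0 \<in> A" unfolding A_def using p by (auto simp: partitions_def)
    moreover have "Max A = t"
    proof (rule Max_eqI[OF \<open>finite A\<close>])
      fix y assume "y \<in> A"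
      then obtain i where "y \<in> set (xs i)" unfolding A_def by blast
      thus "y \<le> t" using p[of i] Max_ge by (auto simp: partitions_def)
    next
      have "t \<in> set (xs undefined)" using xs(1)[of undefined] last_in_set by (auto simp: Lt_def)
      thus "t \<in> A" unfolding A_def by blast
    qed
    ultimately show ?thesis by (simp add: partitions_def)
  qed
  define zs where "zs = sorted_list_of_set A"
  have zs: "zs \<in> Lt t" "set zs = A" using part_Lt[OF \<open>A \<in> partitions t\<close>] zs_def by auto
  have R: "Ecomp P f (xs i) u \<le> Ecomp P f zs u" for i
    by (rule Ecomp_refine) (use zs xs(1)[of i] in \<open>auto simp: Lt_def A_def\<close>)
  have "nisio P f t u \<le> Ecomp P f zs u + vec e"
    unfolding less_eq_vec_def
  proof
    fix i
    have "Ecomp P f (xs i) u $ i \<le> Ecomp P f zs u $ i" using R[of i] by (simp add: less_eq_vec_def)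
    thus "nisio P f t u $ i \<le> (Ecomp P f zs u + vec e) $ i" using xs(2)[of i] by simp
  qed
  thus ?thesis using zs by blast
qed

end



context nis
begin

lemma N_zero: "nisio P f 0 u = u"
  unfolding nisio_Lt Lt_zero by (simp add: vsup_single)

lemma N_comp:
  assumes s: "0 \<le> s" and t: "0 \<le> t"
  shows "nisio P f (s+t) u = nisio P f s (nisio P f t u)"
proof (rule antisym)
  show "nisio P f (s+t) u \<le> nisio P f s (nisio P f t u)"
  proof (rule N_least)
    show "0 \<le> s + t" using s t by simp
    fix zs assume zs: "zs \<in> Lt (s+t)"
    have pz: "set zs \<in> partitions (s+t)" by (rule Lt_part(1)[OF zs])
    define A where "A = insert s (set zs)"
    have fin: "finite (set zs)" by simp
    have "A \<in> partitions (s+t)"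
    proof -
      have "Max A = max s (Max (set zs))" unfolding A_def
        by (rule Max_insert[OF fin]) (use zs in \<open>auto simp: Lt_def\<close>)
      also have "Max (set zs) = s + t" using pz by (simp add: partitions_def)
      finally have "Max A = s + t" using t by simp
      thus ?thesis using pz s by (auto simp: partitions_def A_def)
    qed
    define zs' where "zs' = sorted_list_of_set A"
    have zs': "zs' \<in> Lt (s+t)" "set zs' = A" using part_Lt[OF \<open>A \<in> partitions (s+t)\<close>] zs'_def by auto
    have "Ecomp P f zs u \<le> Ecomp P f zs' u"
      by (rule Ecomp_refine) (use zs zs' in \<open>auto simp: Lt_def A_def\<close>)
    moreover obtain xs ys where xs: "xs \<in> Lt s" and ys: "ys \<in> Lt t"
      and eq: "Ecomp P f zs' = Ecomp P f xs \<circ> Ecomp P f ys"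
      using Lt_split[OF zs'(1), of P f] zs'(2) A_def by auto
    moreover have "Ecomp P f xs (Ecomp P f ys u) \<le> Ecomp P f xs (nisio P f t u)"
      by (rule Ecomp_mono[OF Lt_sw[OF xs] N_upper[OF ys]])
    moreover have "Ecomp P f xs (nisio P f t u) \<le> nisio P f s (nisio P f t u)"
      by (rule N_upper[OF xs])
    ultimately show "Ecomp P f zs u \<le> nisio P f s (nisio P f t u)"
      by (metis comp_apply order_trans)
  qed
  show "nisio P f s (nisio P f t u) \<le> nisio P f (s+t) u"
  proof (rule N_least[OF s])
    fix xs assume xs: "xs \<in> Lt s"
    have E: "Ecomp P f xs (nisio P f t u) \<le> nisio P f (s+t) u + vec e" if e: "0 < e" for e
    proof -
      obtain ys where ys: "ys \<in> Lt t" and le: "nisio P f t u \<le> Ecomp P f ys u + vec e"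
        using N_approx[OF t e] by blast
      have "Ecomp P f xs (nisio P f t u) \<le> Ecomp P f xs (Ecomp P f ys u + vec e)"
        by (rule Ecomp_mono[OF Lt_sw[OF xs] le])
      also have "\<dots> = Ecomp P f xs (Ecomp P f ys u) + vec e"
        by (rule Ecomp_transl[OF Lt_sw[OF xs]])
      also have "Ecomp P f xs (Ecomp P f ys u) = Ecomp P f (xs @ tl (map (\<lambda>r. r + s) ys)) u"
        using Lt_concat(2)[OF xs ys, of P f] by simp
      also have "\<dots> \<le> nisio P f (s+t) u"
        by (rule N_upper[OF Lt_concat(1)[OF xs ys]])
      finally show ?thesis by (simp add: less_eq_vec_def)
    qed
    show "Ecomp P f xs (nisio P f t u) \<le> nisio P f (s+t) u"
      unfolding less_eq_vec_def
    proof
      fix i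
      show "Ecomp P f xs (nisio P f t u) $ i \<le> nisio P f (s+t) u $ i"
      proof (rule field_le_epsilon)
        fix e :: real assume "0 < e"
        thus "Ecomp P f xs (nisio P f t u) $ i \<le> nisio P f (s+t) u $ i + e"
          using E[of e] by (simp add: less_eq_vec_def)
      qed
    qed
  qed
qed

lemma N_mono: "0 \<le> t \<Longrightarrow> u \<le> v \<Longrightarrow> nisio P f t u \<le> nisio P f t v"
  by (rule N_least) (meson Ecomp_mono Lt_sw N_upper order_trans)+

lemma N_const: "0 \<le> t \<Longrightarrow> nisio P f t (vec c) = vec c"
proof (rule antisym)
  assume t: "0 \<le> t"
  show "nisio P f t (vec c) \<le> vec c" by (rule N_least[OF t]) (simp add: Ecomp_const Lt_sw)
  obtain xs where "xs \<in> Lt t" using Lt_ne[OF t] by blast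
  thus "vec c \<le> nisio P f t (vec c)" using N_upper[of xs t "vec c"] Ecomp_const[OF Lt_sw] by simp
qed

lemma N_convex:
  assumes t: "0 \<le> t" and a: "0 \<le> a" "a \<le> 1"
  shows "nisio P f t (a *\<^sub>R u + (1-a) *\<^sub>R v) \<le> a *\<^sub>R nisio P f t u + (1-a) *\<^sub>R nisio P f t v"
proof (rule N_least[OF t])
  fix xs assume xs: "xs \<in> Lt t"
  have "Ecomp P f xs (a *\<^sub>R u + (1-a) *\<^sub>R v) \<le> a *\<^sub>R Ecomp P f xs u + (1-a) *\<^sub>R Ecomp P f xs v"
    by (rule Ecomp_convex[OF Lt_sw[OF xs] a])
  also have "\<dots> \<le> a *\<^sub>R nisio P f t u + (1-a) *\<^sub>R nisio P f t v"
    by (rule cvx_comb_le[OF a N_upper[OF xs] N_upper[OF xs]])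
  finally show "Ecomp P f xs (a *\<^sub>R u + (1-a) *\<^sub>R v) \<le> a *\<^sub>R nisio P f t u + (1-a) *\<^sub>R nisio P f t v" .
qed

lemma N_dom: "0 \<le> t \<Longrightarrow> q \<in> P \<Longrightarrow> Sq f q t u \<le> nisio P f t u"
proof (cases "t = 0")
  case True thus ?thesis by (simp add: N_zero Sq_zero_time)
next
  case False
  assume t: "0 \<le> t" and q: "q \<in> P"
  hence xs: "[0, t] \<in> Lt t" using False Lt_two by simp
  have "Sq f q t u \<le> Eh P f t u" by (rule Eh_ub[OF q t])
  also have "\<dots> = Ecomp P f [0, t] u" by simp
  also have "\<dots> \<le> nisio P f t u" by (rule N_upper[OF xs])
  finally show ?thesis .
qed

lemma Ecomp_le_T:
  assumes sg: "is_semigroup T" and dom: "dominates P f T"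
  shows "sorted_wrt (<) xs \<Longrightarrow> xs \<noteq> [] \<Longrightarrow> Ecomp P f xs u \<le> T (last xs - hd xs) u"
proof (induction xs rule: induct_list012)
  case (2 x)
  have "T 0 = id" using sg by (simp add: is_semigroup_def)
  thus ?case by simp
next
  case (3 x y rest)
  have sw: "sorted_wrt (<) (y # rest)" using 3 by simp
  have IH: "Ecomp P f (y # rest) u \<le> T (last (y # rest) - y) u" using 3(2)[OF sw] by simp
  have h: "0 \<le> y - x" using 3 by simp
  have h2: "0 \<le> last (y # rest) - y" using sw_le_last[OF sw, of y] by simp
  have cmp: "T ((y - x) + (last (y # rest) - y)) = T (y - x) \<circ> T (last (y # rest) - y)"
    using sg h h2 unfolding is_semigroup_def by blast
  have "Ecomp P f (x # y # rest) u = Eh P f (y - x) (Ecomp P f (y # rest) u)" by simp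
  also have "\<dots> \<le> Eh P f (y - x) (T (last (y # rest) - y) u)" by (rule Eh_mono[OF h IH])
  also have "\<dots> \<le> T (y - x) (T (last (y # rest) - y) u)"
    by (rule Eh_least[OF h]) (use dom h in \<open>simp add: dominates_def\<close>)
  also have "\<dots> = T ((y - x) + (last (y # rest) - y)) u"
    using cmp by simp
  also have "(y - x) + (last (y # rest) - y) = last (x # y # rest) - hd (x # y # rest)" by simp
  finally show ?case .
qed simp

lemma N_min:
  assumes sg: "is_semigroup T" and dom: "dominates P f T" and t: "0 \<le> t"
  shows "nisio P f t u \<le> T t u"
proof (rule N_least[OF t])
  fix xs assume xs: "xs \<in> Lt t"
  have "last xs - hd xs = t" using xs by (simp add: Lt_def)
  thus "Ecomp P f xs u \<le> T t u" using Ecomp_le_T[OF sg dom, of xs u] xs by (simp add: Lt_def)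
qed

end

theorem mainTheorem8:
  fixes P :: "(real^'n^'n) set" and f :: "real^'n^'n \<Rightarrow> real^'n" and q0 :: "real^'n^'n"
  assumes Q: "\<forall>q\<in>P. is_Q_matrix q"
    and q0: "q0 \<in> P" and fq0: "f q0 = 0" and fsup: "vsup (f ` P) = 0"
    and fin: "\<forall>u. \<forall>i. bdd_above ((\<lambda>q. (q *v u + f q) $ i) ` P)"
  shows "is_semigroup (nisio P f)
    \<and> (\<forall>t\<ge>0. is_kernel (nisio P f t) \<and> is_convex_map (nisio P f t))
    \<and> is_semigroup_envelope P f (nisio P f)"
proof -
  have fle: "\<forall>q\<in>P. f q \<le> 0"
  proof
    fix q assume q: "q \<in> P"
    show "f q \<le> 0" unfolding less_eq_vec_def
    proof
      fix i
      have bdd: "bdd_above ((\<lambda>q. f q $ i) ` P)" using fin[rule_format, of 0 i] by simp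
      have "f q $ i \<le> (SUP v\<in>f ` P. v $ i)"
        by (rule cSUP_upper) (use q bdd in \<open>simp_all add: image_image\<close>)
      also have "\<dots> = 0" using fsup by (simp add: vsup_def vec_eq_iff)
      finally show "f q $ i \<le> 0 $ i" by simp
    qed
  qed
  interpret nis P f q0 by (unfold_locales) (use Q q0 fq0 fle in auto)
  have sg: "is_semigroup (nisio P f)"
    unfolding is_semigroup_def by (auto simp: fun_eq_iff N_zero N_comp)
  have kc: "\<forall>t\<ge>0. is_kernel (nisio P f t) \<and> is_convex_map (nisio P f t)"
  proof (intro allI impI conjI)
    fix t :: real assume t: "0 \<le> t"
    show "is_kernel (nisio P f t)" unfolding is_kernel_def using N_mono[OF t] N_const[OF t] by blast
    show "is_convex_map (nisio P f t)"
      unfolding is_convex_map_def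
    proof
      fix i
      show "convex_on UNIV (\<lambda>u. nisio P f t u $ i)"
        unfolding convex_on_def
      proof (intro conjI ballI allI impI)
        show "convex (UNIV :: (real^'n) set)" by simp
        fix x y :: "real^'n" and a b :: real
        assume ab: "0 \<le> a" "0 \<le> b" "a + b = 1"
        hence b: "b = 1 - a" and a1: "a \<le> 1" by auto
        have "nisio P f t (a *\<^sub>R x + (1-a) *\<^sub>R y) \<le> a *\<^sub>R nisio P f t x + (1-a) *\<^sub>R nisio P f t y"
          by (rule N_convex[OF t ab(1) a1])
        thus "nisio P f t (a *\<^sub>R x + b *\<^sub>R y) $ i \<le> a * nisio P f t x $ i + b * nisio P f t y $ i"
          using b by (simp add: less_eq_vec_def)
      qed
    qed
  qed
  have env: "is_semigroup_envelope P f (nisio P f)"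
    unfolding is_semigroup_envelope_def
    using sg N_dom N_min by (auto simp: dominates_def)
  show ?thesis using sg kc env by blast
qed


end
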